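(* (i) For every nondeterministic finite automaton with $n$ states there is an IFA with at most $2^n$ states accepting the same language. (ii) For every $n \ge 3$ there exists a nondeterministic finite automaton with $n$ states such that every IFA accepting the same language has at least $2^n - 1$ states. In particular, the worst-case state blowup for converting NFAs to IFAs is $\Theta(2^n)$.
   Context: A $\mathbb{Q}$-weighted automaton $\mathcal{A} = (Q, \Sigma, M, \alpha, \eta)$ consists of a finite state set $Q$, finite alphabet $\Sigma$, $M : \Sigma \to \mathbb{Q}^{Q\times Q}$, initial row vector $\alpha \in \mathbb{Q}^Q$, final column vector $\eta \in \mathbb{Q}^Q$; with $M(a_1\cdots a_k) = M(a_1)\cdots M(a_k)$, it assigns $L_\mathcal{A}(w) = \alpha M(w)\eta$ to each $w \in \Sigma^*$. It is an IFA if $L_\mathcal{A}(w) \in \{0,1\}$ for all $w$, and then its language is $L(\mathcal{A}) = \{w \mid L_\mathcal{A}(w) = 1\}$. The number of states of $\mathcal{A}$ is $|Q|$. *)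

theory Defs
  imports Complex_Main
begin

text \<open>States are {0..<n}; the alphabet is an explicit finite set Sigma.
  A weighted automaton: alphabet, number of states, transition matrices M a,
  initial row vector alpha, final column vector eta.\<close>

record 'a qwa =
  wsig   :: "'a set"
  wn     :: nat
  wM     :: "'a \<Rightarrow> nat \<Rightarrow> nat \<Rightarrow> rat"
  walpha :: "nat \<Rightarrow> rat"
  weta   :: "nat \<Rightarrow> rat"

definition qwa_wf :: "'a qwa \<Rightarrow> bool" where
  "qwa_wf A \<longleftrightarrow> finite (wsig A)"

definition vec_step :: "'a qwa \<Rightarrow> (nat \<Rightarrow> rat) \<Rightarrow> 'a \<Rightarrow> (nat \<Rightarrow> rat)" where
  "vec_step A v a = (\<lambda>j. \<Sum>i<wn A. v i * wM A a i j)"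

definition qwa_weight :: "'a qwa \<Rightarrow> 'a list \<Rightarrow> rat" where
  "qwa_weight A w = (\<Sum>j<wn A. foldl (vec_step A) (walpha A) w j * weta A j)"

definition is_IFA :: "'a qwa \<Rightarrow> bool" where
  "is_IFA A \<longleftrightarrow> qwa_wf A \<and> (\<forall>w \<in> lists (wsig A). qwa_weight A w \<in> {0, 1})"

definition IFA_lang :: "'a qwa \<Rightarrow> 'a list set" where
  "IFA_lang A = {w \<in> lists (wsig A). qwa_weight A w = 1}"

record 'a nfa =
  nsig   :: "'a set"
  nn     :: nat
  ndelta :: "nat \<Rightarrow> 'a \<Rightarrow> nat set"
  ninit  :: "nat set"
  nfinal :: "nat set"

definition nfa_wf :: "'a nfa \<Rightarrow> bool" where
  "nfa_wf N \<longleftrightarrow> finite (nsig N) \<and> ninit N \<subseteq> {..<nn N} \<and> nfinal N \<subseteq> {..<nn N}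
     \<and> (\<forall>q<nn N. \<forall>a\<in>nsig N. ndelta N q a \<subseteq> {..<nn N})"

definition nfa_step :: "'a nfa \<Rightarrow> nat set \<Rightarrow> 'a \<Rightarrow> nat set" where
  "nfa_step N S a = (\<Union>q\<in>S. ndelta N q a)"

definition nfa_lang :: "'a nfa \<Rightarrow> 'a list set" where
  "nfa_lang N = {w \<in> lists (nsig N). foldl (nfa_step N) (ninit N) w \<inter> nfinal N \<noteq> {}}"

end

theory Submission
  imports Defs "HOL-Library.Nat_Bijection"
begin

lemma sum_pow2_lt: "(\<Sum>x<n. (2::nat)^x) < 2^n"
  by (induction n) auto

lemma set_encode_lt: "S \<subseteq> {..<n} \<Longrightarrow> set_encode S < 2^n"
proof -
  assume S: "S \<subseteq> {..<n}"
  have "set_encode S = (\<Sum>x\<in>S. (2::nat)^x)" by (simp add: set_encode_def)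
  also have "\<dots> \<le> (\<Sum>x<n. 2^x)" by (rule sum_mono2) (use S in auto)
  also have "\<dots> < 2^n" by (rule sum_pow2_lt)
  finally show ?thesis .
qed

lemma sum_ind: "k < (K::nat) \<Longrightarrow> (\<Sum>i<K. (if i = k then 1 else 0) * f i) = (f k :: rat)"
proof -
  assume "k < K"
  have "(\<Sum>i<K. (if i = k then 1 else 0) * f i) = (\<Sum>i<K. if i = k then f i else 0)"
    by (rule sum.cong) auto
  also have "\<dots> = f k" using \<open>k < K\<close> by (simp add: sum.delta)
  finally show ?thesis .
qed

definition dfa_of :: "'a nfa \<Rightarrow> 'a qwa" where
  "dfa_of N = \<lparr> wsig = nsig N, wn = 2 ^ nn N,
     wM = (\<lambda>a k l. if l = set_encode (nfa_step N (set_decode k) a) then 1 else 0),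
     walpha = (\<lambda>k. if k = set_encode (ninit N) then 1 else 0),
     weta = (\<lambda>k. if set_decode k \<inter> nfinal N \<noteq> {} then 1 else 0) \<rparr>"

definition ind :: "nat \<Rightarrow> nat \<Rightarrow> rat" where
  "ind k = (\<lambda>l. if l = k then 1 else 0)"

lemma dfa_simps[simp]: "wn (dfa_of N) = 2 ^ nn N" "wsig (dfa_of N) = nsig N"
  by (simp_all add: dfa_of_def)

lemma step_sub:
  assumes "nfa_wf N" "S \<subseteq> {..<nn N}" "a \<in> nsig N"
  shows "nfa_step N S a \<subseteq> {..<nn N}"
  using assms unfolding nfa_wf_def nfa_step_def by blast

lemma vec_step_dfa:
  assumes "nfa_wf N" "S \<subseteq> {..<nn N}"
  shows "vec_step (dfa_of N) (ind (set_encode S)) a = ind (set_encode (nfa_step N S a))"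
proof
  fix l
  have fin: "finite S" using assms(2) finite_subset by blast
  have lt: "set_encode S < 2 ^ nn N" using set_encode_lt[OF assms(2)] .
  have "vec_step (dfa_of N) (ind (set_encode S)) a l = wM (dfa_of N) a (set_encode S) l"
    unfolding vec_step_def ind_def dfa_simps using lt by (rule sum_ind)
  also have "\<dots> = ind (set_encode (nfa_step N S a)) l"
    using fin by (simp add: dfa_of_def ind_def)
  finally show "vec_step (dfa_of N) (ind (set_encode S)) a l = ind (set_encode (nfa_step N S a)) l" .
qed

lemma foldl_dfa:
  assumes "nfa_wf N"
  shows "S \<subseteq> {..<nn N} \<Longrightarrow> w \<in> lists (nsig N) \<Longrightarrow>
    foldl (vec_step (dfa_of N)) (ind (set_encode S)) w = ind (set_encode (foldl (nfa_step N) S w))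
    \<and> foldl (nfa_step N) S w \<subseteq> {..<nn N}"
proof (induction w arbitrary: S)
  case Nil
  then show ?case by simp
next
  case (Cons a w)
  have "nfa_step N S a \<subseteq> {..<nn N}" using step_sub[OF assms Cons.prems(1)] Cons.prems(2) by simp
  then show ?case using Cons vec_step_dfa[OF assms Cons.prems(1)] by simp
qed

lemma weight_dfa:
  assumes "nfa_wf N" "w \<in> lists (nsig N)"
  shows "qwa_weight (dfa_of N) w = (if foldl (nfa_step N) (ninit N) w \<inter> nfinal N \<noteq> {} then 1 else 0)"
proof -
  have i: "ninit N \<subseteq> {..<nn N}" using assms(1) by (simp add: nfa_wf_def)
  have al: "walpha (dfa_of N) = ind (set_encode (ninit N))" by (simp add: dfa_of_def ind_def fun_eq_iff)
  define F where "F = foldl (nfa_step N) (ninit N) w"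
  have F: "foldl (vec_step (dfa_of N)) (walpha (dfa_of N)) w = ind (set_encode F)" "F \<subseteq> {..<nn N}"
    using foldl_dfa[OF assms(1) i assms(2)] al F_def by auto
  have fin: "finite F" using F(2) finite_subset by blast
  have lt: "set_encode F < 2 ^ nn N" using set_encode_lt[OF F(2)] .
  have "qwa_weight (dfa_of N) w = weta (dfa_of N) (set_encode F)"
    unfolding qwa_weight_def F(1) ind_def using lt by (simp add: dfa_of_def sum_ind)
  also have "\<dots> = (if F \<inter> nfinal N \<noteq> {} then 1 else 0)" using fin by (simp add: dfa_of_def)
  finally show ?thesis by (simp add: F_def)
qed

lemma part1:
  assumes "nfa_wf N"
  shows "\<exists>A :: 'a qwa. is_IFA A \<and> wsig A = nsig N \<and> IFA_lang A = nfa_lang N \<and> wn A \<le> 2 ^ nn N"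
proof (intro exI conjI)
  show "is_IFA (dfa_of N)" using assms weight_dfa[OF assms]
    by (simp add: is_IFA_def qwa_wf_def nfa_wf_def)
  show "wsig (dfa_of N) = nsig N" by simp
  show "IFA_lang (dfa_of N) = nfa_lang N" using weight_dfa[OF assms]
    by (force simp: IFA_lang_def nfa_lang_def split: if_splits)
  show "wn (dfa_of N) \<le> 2 ^ nn N" by simp
qed


lemma dep:
  fixes x :: "'i \<Rightarrow> nat \<Rightarrow> rat"
  shows "finite I \<Longrightarrow> m < card I \<Longrightarrow> \<exists>c. (\<exists>i\<in>I. c i \<noteq> 0) \<and> (\<forall>j<m. (\<Sum>i\<in>I. c i * x i j) = 0)"
proof (induction m arbitrary: I x)
  case 0
  then obtain i where "i \<in> I" by fastforce
  then show ?case by (intro exI[of _ "\<lambda>_. 1"]) auto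
next
  case (Suc m)
  show ?case
  proof (cases "\<forall>i\<in>I. x i m = 0")
    case True
    obtain c where c: "\<exists>i\<in>I. c i \<noteq> 0" "\<forall>j<m. (\<Sum>i\<in>I. c i * x i j) = 0"
      using Suc.IH[of I x] Suc.prems by auto
    have "\<forall>j<Suc m. (\<Sum>i\<in>I. c i * x i j) = 0"
    proof (intro allI impI)
      fix j assume "j < Suc m"
      then consider "j < m" | "j = m" by linarith
      then show "(\<Sum>i\<in>I. c i * x i j) = 0"
        by cases (use c True in auto)
    qed
    then show ?thesis using c by blast
  next
    case False
    then obtain p where p: "p \<in> I" "x p m \<noteq> 0" by blast
    define I' where "I' = I - {p}"
    define y where "y = (\<lambda>i j. x i j - (x i m / x p m) * x p j)"
    have fin: "finite I'" using Suc.prems I'_def by auto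
    have cI': "m < card I'" using Suc.prems p I'_def by auto
    obtain d where d: "\<exists>i\<in>I'. d i \<noteq> 0" "\<forall>j<m. (\<Sum>i\<in>I'. d i * y i j) = 0"
      using Suc.IH[OF fin cI', of y] by auto
    define cp where "cp = - (\<Sum>i\<in>I'. d i * x i m) / x p m"
    define c where "c = (\<lambda>i. if i = p then cp else d i)"
    have split: "(\<Sum>i\<in>I. c i * x i j) = cp * x p j + (\<Sum>i\<in>I'. d i * x i j)" for j
    proof -
      have "(\<Sum>i\<in>I. c i * x i j) = c p * x p j + (\<Sum>i\<in>I'. c i * x i j)"
        unfolding I'_def using Suc.prems(1) p(1) by (simp add: sum.remove)
      also have "(\<Sum>i\<in>I'. c i * x i j) = (\<Sum>i\<in>I'. d i * x i j)"
        by (rule sum.cong) (auto simp: c_def I'_def)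
      finally show ?thesis by (simp add: c_def)
    qed
    have ysum: "(\<Sum>i\<in>I'. d i * y i j) = (\<Sum>i\<in>I'. d i * x i j) + cp * x p j" for j
    proof -
      have "(\<Sum>i\<in>I'. d i * y i j) = (\<Sum>i\<in>I'. d i * x i j) - (\<Sum>i\<in>I'. d i * x i m) / x p m * x p j"
      proof -
        have "(\<Sum>i\<in>I'. d i * y i j) = (\<Sum>i\<in>I'. d i * x i j - (d i * x i m / x p m) * x p j)"
          unfolding y_def by (rule sum.cong) (auto simp: algebra_simps)
        also have "\<dots> = (\<Sum>i\<in>I'. d i * x i j) - (\<Sum>i\<in>I'. d i * x i m / x p m) * x p j"
          by (simp add: sum_subtractf sum_distrib_right)
        also have "(\<Sum>i\<in>I'. d i * x i m / x p m) = (\<Sum>i\<in>I'. d i * x i m) / x p m"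
          by (simp add: sum_divide_distrib)
        finally show ?thesis .
      qed
      then show ?thesis by (simp add: cp_def)
    qed
    have "\<forall>j<Suc m. (\<Sum>i\<in>I. c i * x i j) = 0"
    proof (intro allI impI)
      fix j assume "j < Suc m"
      then consider "j < m" | "j = m" by linarith
      then show "(\<Sum>i\<in>I. c i * x i j) = 0"
      proof cases
        case 1 then show ?thesis using d(2) ysum split by (simp add: add.commute)
      next
        case 2 then show ?thesis using split p(2) by (simp add: cp_def)
      qed
    qed
    moreover have "\<exists>i\<in>I. c i \<noteq> 0" using d(1) by (auto simp: c_def I'_def)
    ultimately show ?thesis by blast
  qed
qed

lemma vec_step_lin:
  "vec_step A (\<lambda>j. \<Sum>i\<in>I. c i * v i j) a = (\<lambda>j. \<Sum>i\<in>I. c i * vec_step A (v i) a j)"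
  unfolding vec_step_def
  by (auto simp: sum_distrib_left sum_distrib_right mult.assoc intro: sum.swap)

lemma foldl_lin:
  "foldl (vec_step A) (\<lambda>j. \<Sum>i\<in>I. c i * v i j) w = (\<lambda>j. \<Sum>i\<in>I. c i * foldl (vec_step A) (v i) w j)"
proof (induction w arbitrary: v)
  case Nil then show ?case by simp
next
  case (Cons a w)
  show ?case using Cons.IH[of "\<lambda>i. vec_step A (v i) a"] by (simp add: vec_step_lin)
qed

lemma foldl_local:
  "(\<forall>j<wn A. v j = v' j) \<Longrightarrow> j < wn A \<Longrightarrow> foldl (vec_step A) v w j = foldl (vec_step A) v' w j"
proof (induction w arbitrary: v v')
  case Nil then show ?case by simp
next
  case (Cons a w)
  have "vec_step A v a = vec_step A v' a" unfolding vec_step_def using Cons.prems(1)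
    by (auto intro!: sum.cong)
  then show ?case by simp
qed

lemma foldl_zero: "foldl (vec_step A) (\<lambda>_. 0) w = (\<lambda>_. 0)"
  by (induction w) (auto simp: vec_step_def)

lemma comb:
  fixes c :: "nat set \<Rightarrow> rat"
  assumes K: "finite K"
    and I: "I = {S. S \<subseteq> K \<and> S \<noteq> {}}"
    and h: "\<forall>T\<in>I. (\<Sum>S\<in>I. c S * (if S \<inter> T \<noteq> {} then 1 else 0)) = 0"
  shows "\<forall>S\<in>I. c S = 0"
proof -
  have finI: "finite I" unfolding I using K by auto
  have tot: "(\<Sum>S\<in>I. c S) = 0"
  proof (cases "K = {}")
    case True then show ?thesis unfolding I by auto
  next
    case False
    then have "K \<in> I" unfolding I by auto
    then have "(\<Sum>S\<in>I. c S * (if S \<inter> K \<noteq> {} then 1 else 0)) = 0" using h by blast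
    moreover have "(\<Sum>S\<in>I. c S * (if S \<inter> K \<noteq> {} then 1 else 0)) = (\<Sum>S\<in>I. c S)"
      by (rule sum.cong) (auto simp: I Int_absorb2)
    ultimately show ?thesis by simp
  qed
  have sub: "(\<Sum>S\<in>I. c S * (if S \<subseteq> U then 1 else 0)) = 0" if U: "U \<subseteq> K" for U
  proof (cases "U = K")
    case True
    have "(\<Sum>S\<in>I. c S * (if S \<subseteq> U then 1 else 0)) = (\<Sum>S\<in>I. c S)"
      by (rule sum.cong) (auto simp: I True)
    then show ?thesis using tot by simp
  next
    case False
    define T where "T = K - U"
    have "T \<in> I" using U False unfolding I T_def by auto
    then have "(\<Sum>S\<in>I. c S * (if S \<inter> T \<noteq> {} then 1 else 0)) = 0" using h by blast
    moreover have "(\<Sum>S\<in>I. c S * (if S \<inter> T \<noteq> {} then 1 else 0))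
       = (\<Sum>S\<in>I. c S - c S * (if S \<subseteq> U then 1 else 0))"
      by (rule sum.cong) (auto simp: I T_def)
    ultimately show ?thesis using tot by (simp add: sum_subtractf)
  qed
  have "\<forall>S. S \<in> I \<longrightarrow> card S = k \<longrightarrow> c S = 0" for k
  proof (induction k rule: less_induct)
    case (less k)
    show ?case
    proof (intro allI impI)
      fix S assume S: "S \<in> I" "card S = k"
      have finS: "finite S" using S K unfolding I by (auto intro: finite_subset)
      have "(\<Sum>S'\<in>I. c S' * (if S' \<subseteq> S then 1 else 0)) = 0"
        using sub S unfolding I by auto
      moreover have "(\<Sum>S'\<in>I. c S' * (if S' \<subseteq> S then 1 else 0))
         = c S + (\<Sum>S'\<in>I - {S}. c S' * (if S' \<subseteq> S then 1 else 0))"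
        using finI S(1) by (simp add: sum.remove)
      moreover have "(\<Sum>S'\<in>I - {S}. c S' * (if S' \<subseteq> S then 1 else 0)) = 0"
      proof (rule sum.neutral, intro ballI)
        fix S' assume S': "S' \<in> I - {S}"
        show "c S' * (if S' \<subseteq> S then 1 else 0) = 0"
        proof (cases "S' \<subseteq> S")
          case True
          then have "S' \<subset> S" using S' by auto
          then have "card S' < k" using finS S(2) psubset_card_mono by blast
          then show ?thesis using less S' by auto
        qed simp
      qed
      ultimately show "c S = 0" by simp
    qed
  qed
  then show ?thesis by blast
qed


definition kill_nfa :: "nat \<Rightarrow> nat nfa" where
  "kill_nfa n = \<lparr> nsig = {..<n}, nn = n, ndelta = (\<lambda>q a. if q = a then {} else {q}),
     ninit = {..<n}, nfinal = {..<n} \<rparr>"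

lemma kill_simps[simp]: "nsig (kill_nfa n) = {..<n}" "nn (kill_nfa n) = n"
  by (simp_all add: kill_nfa_def)

lemma kill_wf: "nfa_wf (kill_nfa n)"
  by (auto simp: nfa_wf_def kill_nfa_def)

lemma kill_step: "foldl (nfa_step (kill_nfa n)) S w = S - set w"
proof (induction w arbitrary: S)
  case Nil then show ?case by simp
next
  case (Cons a w)
  have "nfa_step (kill_nfa n) S a = S - {a}" by (auto simp: nfa_step_def kill_nfa_def)
  then show ?case using Cons by auto
qed

lemma kill_lang: "w \<in> nfa_lang (kill_nfa n) \<longleftrightarrow> w \<in> lists {..<n} \<and> \<not> {..<n} \<subseteq> set w"
  by (auto simp: nfa_lang_def kill_step) (auto simp: kill_nfa_def)

lemma lower:
  assumes A: "is_IFA A" "wsig A = {..<n}" "IFA_lang A = nfa_lang (kill_nfa n)"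
  shows "wn A \<ge> 2 ^ n - 1"
proof (rule ccontr)
  assume "\<not> wn A \<ge> 2 ^ n - 1"
  then have lt: "wn A < 2 ^ n - 1" by simp
  define I where "I = {S. S \<subseteq> {..<n} \<and> S \<noteq> {}}"
  have "I = Pow {..<n} - {{}}" unfolding I_def by auto
  then have cardI: "card I = 2 ^ n - 1" by (simp add: card_Pow)
  have finI: "finite I" unfolding I_def by auto
  define u where "u S = sorted_list_of_set ({..<n} - S)" for S :: "nat set"
  have setu: "set (u S) = {..<n} - S" for S unfolding u_def by simp
  define xv where "xv S = foldl (vec_step A) (walpha A) (u S)" for S
  obtain c where c: "\<exists>S\<in>I. c S \<noteq> 0" "\<forall>j<wn A. (\<Sum>S\<in>I. c S * xv S j) = 0"
    using dep[OF finI, of "wn A" xv] lt cardI by auto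
  have wt: "qwa_weight A (u S @ u T) = (if S \<inter> T \<noteq> {} then 1 else 0)" if "S \<in> I" "T \<in> I" for S T
  proof -
    have inl: "u S @ u T \<in> lists (wsig A)" using A(2) setu by auto
    then have w01: "qwa_weight A (u S @ u T) \<in> {0, 1}" using A(1) by (simp add: is_IFA_def)
    have "qwa_weight A (u S @ u T) = 1 \<longleftrightarrow> u S @ u T \<in> nfa_lang (kill_nfa n)"
      using inl A(3)[symmetric] by (simp add: IFA_lang_def)
    also have "\<dots> \<longleftrightarrow> S \<inter> T \<noteq> {}"
      using inl A(2) that unfolding kill_lang I_def by (auto simp: setu)
    finally show ?thesis using w01 by auto
  qed
  have zero: "(\<Sum>S\<in>I. c S * qwa_weight A (u S @ u T)) = 0" for T
  proof -
    define z where "z = (\<lambda>j. \<Sum>S\<in>I. c S * xv S j)"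
    have "(\<Sum>S\<in>I. c S * qwa_weight A (u S @ u T))
       = (\<Sum>S\<in>I. \<Sum>j<wn A. c S * (foldl (vec_step A) (xv S) (u T) j * weta A j))"
      unfolding qwa_weight_def xv_def by (simp add: sum_distrib_left)
    also have "\<dots> = (\<Sum>j<wn A. (\<Sum>S\<in>I. c S * foldl (vec_step A) (xv S) (u T) j) * weta A j)"
      by (subst sum.swap) (simp add: sum_distrib_right mult.assoc)
    also have "\<dots> = (\<Sum>j<wn A. foldl (vec_step A) z (u T) j * weta A j)"
      unfolding z_def foldl_lin by simp
    also have "\<dots> = (\<Sum>j<wn A. foldl (vec_step A) (\<lambda>_. 0) (u T) j * weta A j)"
      by (rule sum.cong[OF refl], subst foldl_local[of A z "\<lambda>_. 0"]) (use c(2) z_def in auto)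
    also have "\<dots> = 0" by (simp add: foldl_zero)
    finally show ?thesis .
  qed
  have "\<forall>T\<in>I. (\<Sum>S\<in>I. c S * (if S \<inter> T \<noteq> {} then 1 else 0)) = 0"
  proof
    fix T assume T: "T \<in> I"
    have "(\<Sum>S\<in>I. c S * (if S \<inter> T \<noteq> {} then 1 else 0)) = (\<Sum>S\<in>I. c S * qwa_weight A (u S @ u T))"
      by (rule sum.cong) (use wt T in auto)
    then show "(\<Sum>S\<in>I. c S * (if S \<inter> T \<noteq> {} then 1 else 0)) = 0" using zero by simp
  qed
  then have "\<forall>S\<in>I. c S = 0" using comb[of "{..<n}" I c] I_def by auto
  then show False using c(1) by blast
qed

theorem proposition4:
  shows "(\<forall>N :: 'a nfa. nfa_wf N \<longrightarrow>
            (\<exists>A :: 'a qwa. is_IFA A \<and> wsig A = nsig N \<and> IFA_lang A = nfa_lang N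
                            \<and> wn A \<le> 2 ^ nn N))
       \<and> (\<forall>n::nat. n \<ge> 3 \<longrightarrow>
            (\<exists>N :: nat nfa. nfa_wf N \<and> nn N = n \<and>
               (\<forall>A :: nat qwa. is_IFA A \<and> wsig A = nsig N \<and> IFA_lang A = nfa_lang N
                               \<longrightarrow> wn A \<ge> 2 ^ n - 1)))"
proof (intro conjI allI impI)
  fix N :: "'a nfa" assume "nfa_wf N"
  then show "\<exists>A :: 'a qwa. is_IFA A \<and> wsig A = nsig N \<and> IFA_lang A = nfa_lang N \<and> wn A \<le> 2 ^ nn N"
    by (rule part1)
next
  fix n :: nat assume "n \<ge> 3"
  show "\<exists>N :: nat nfa. nfa_wf N \<and> nn N = n \<and>
               (\<forall>A :: nat qwa. is_IFA A \<and> wsig A = nsig N \<and> IFA_lang A = nfa_lang N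
                               \<longrightarrow> wn A \<ge> 2 ^ n - 1)"
    by (rule exI[of _ "kill_nfa n"]) (use kill_wf lower in auto)
qed

end
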